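(* Let $M\ge 1$, $H\ge1$, $[M]=\{0,\dots,M-1\}$, and fix a message $s_{1:H}\in[M]^H$. Let $T\ge1$ and let $\mathbf z=(z_1,\dots,z_T)$ be a realized sequence of step seeds; let $\mathcal Z_T$ be the set of distinct values among $z_1,\dots,z_T$, and for $z\in\mathcal Z_T$ let $n_z=|\{t\in\{1,\dots,T\}: z_t=z\}|$, $S_T=\sum_{z\in\mathcal Z_T}n_z^2$ and $T_{\mathrm{eff}}=T^2/S_T$. To each distinct seed $z$ is associated a random pair $(i_z,\phi_z)$ with $i_z\in\{1,\dots,H\}$ and $\phi_z$ a permutation of $[M]$; at step $t$ the target bin is $r_t^\star=\phi_{z_t}(s_{i_{z_t}})$. Assume that, conditional on $\mathbf z$, the pairs $\{(i_z,\phi_z)\}_{z\in\mathcal Z_T}$ are independent across distinct seeds, and each $\phi_z$ is a uniformly random permutation of $[M]$ independent of $i_z$. Define $\hat\pi_T(r)=\frac1T\sum_{t=1}^T\mathbf 1\{r_t^\star=r\}$ for $r\in[M]$. Then for every $r\in[M]$, $$\mathbb E\big[\hat\pi_T(r)\mid \mathbf z\big]=\frac1M,$$ and for every $\epsilon>0$, $$\mathbb P\Big(\Big|\hat\pi_T(r)-\frac1M\Big|\ge\epsilon\ \Big|\ \mathbf z\Big)\le 2\exp\!\Big(-\frac{2\epsilon^2T^2}{S_T}\Big)=2\exp\!\big(-2\epsilon^2T_{\mathrm{eff}}\big).$$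
   Context: This models the QuantileMark watermark, in which at each step $t$ a position index $i_t$ (which message symbol to embed) and a permutation $\phi_t$ of $[M]$ (mapping symbols to quantile-bin indices) are derived by a pseudorandom function from a secret key and a step seed $z_t$ (a hash of the local context); repeated seeds reuse the same pair. $\hat\pi_T$ is the empirical occupancy of target bins over $T$ steps. *)

theory Defs
  imports "HOL-Probability.Probability"
begin

definition seed_set :: "(nat \<Rightarrow> 'z) \<Rightarrow> nat \<Rightarrow> 'z set" where
  "seed_set z T = z ` {1..T}"

definition seed_count :: "(nat \<Rightarrow> 'z) \<Rightarrow> nat \<Rightarrow> 'z \<Rightarrow> nat" where
  "seed_count z T w = card {t \<in> {1..T}. z t = w}"

definition S_T :: "(nat \<Rightarrow> 'z) \<Rightarrow> nat \<Rightarrow> real" where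
  "S_T z T = (\<Sum>w\<in>seed_set z T. real (seed_count z T w) ^ 2)"

definition T_eff :: "(nat \<Rightarrow> 'z) \<Rightarrow> nat \<Rightarrow> real" where
  "T_eff z T = real T ^ 2 / S_T z T"

(* target bin at step t: phi_{z_t}(s_{i_{z_t}}), where X w \<omega> = (i_w, phi_w) *)
definition target_bin ::
  "('z \<Rightarrow> 'a \<Rightarrow> nat \<times> (nat \<Rightarrow> nat)) \<Rightarrow> (nat \<Rightarrow> nat) \<Rightarrow> (nat \<Rightarrow> 'z) \<Rightarrow> nat \<Rightarrow> 'a \<Rightarrow> nat" where
  "target_bin X s z t \<omega> = snd (X (z t) \<omega>) (s (fst (X (z t) \<omega>)))"

definition pi_hat ::
  "('z \<Rightarrow> 'a \<Rightarrow> nat \<times> (nat \<Rightarrow> nat)) \<Rightarrow> (nat \<Rightarrow> nat) \<Rightarrow> (nat \<Rightarrow> 'z) \<Rightarrow> nat \<Rightarrow> nat \<Rightarrow> 'a \<Rightarrow> real" where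
  "pi_hat X s z T r \<omega> = (1 / real T) * (\<Sum>t\<in>{1..T}. (if target_bin X s z t \<omega> = r then 1 else 0))"

end

theory Submission imports Defs begin

lemma perm_count:
  assumes "finite S" "a \<in> S" "b \<in> S"
  shows "card {p. p permutes S \<and> p a = b} = fact (card S - 1)"
proof -
  have "bij_betw (\<lambda>q. Transposition.transpose a b \<circ> q) {q. q permutes S - {a}} {p. p permutes S \<and> p a = b}"
  proof (rule bij_betwI[where g="\<lambda>q. Transposition.transpose a b \<circ> q"])
    show "(\<lambda>q. Transposition.transpose a b \<circ> q) \<in> {q. q permutes S - {a}} \<rightarrow> {p. p permutes S \<and> p a = b}"
    proof
      fix q assume "q \<in> {q. q permutes S - {a}}"
      hence q: "q permutes S - {a}" by simp
      hence q': "q permutes S" by (rule permutes_subset) auto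
      have "q a = a" using q by (simp add: permutes_not_in)
      moreover have "Transposition.transpose a b \<circ> q permutes S"
        using permutes_compose[OF q' permutes_swap_id[OF assms(2,3)]] by simp
      ultimately show "Transposition.transpose a b \<circ> q \<in> {p. p permutes S \<and> p a = b}" by simp
    qed
    show "(\<lambda>q. Transposition.transpose a b \<circ> q) \<in> {p. p permutes S \<and> p a = b} \<rightarrow> {q. q permutes S - {a}}"
    proof
      fix p assume "p \<in> {p. p permutes S \<and> p a = b}"
      hence p: "p permutes insert a (S - {a})" "p a = b" using assms by (auto simp: insert_absorb)
      from permutes_insert_lemma[OF p(1)] p(2)
      show "Transposition.transpose a b \<circ> p \<in> {q. q permutes S - {a}}" by simp
    qed
  qed (auto simp: fun_eq_iff o_assoc)
  hence "card {p. p permutes S \<and> p a = b} = card {q. q permutes S - {a}}"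
    by (simp add: bij_betw_same_card)
  also have "\<dots> = fact (card S - 1)"
    using assms by (intro card_permutations) auto
  finally show ?thesis .
qed

theorem proposition1:
  fixes P :: "'a measure"
    and M H T :: nat
    and s :: "nat \<Rightarrow> nat"
    and z :: "nat \<Rightarrow> 'z"
    and X :: "'z \<Rightarrow> 'a \<Rightarrow> nat \<times> (nat \<Rightarrow> nat)"
  assumes "prob_space P"
    and "M \<ge> 1" and "H \<ge> 1" and "T \<ge> 1"
    and msg: "\<forall>i\<in>{1..H}. s i < M"
    and indep: "prob_space.indep_vars P (\<lambda>_. count_space UNIV) X (seed_set z T)"
    and idx: "\<forall>w\<in>seed_set z T. \<forall>\<omega>\<in>space P. fst (X w \<omega>) \<in> {1..H}"
    and unif: "\<forall>w\<in>seed_set z T.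
       distr P (count_space UNIV) (\<lambda>\<omega>. snd (X w \<omega>))
         = uniform_measure (count_space UNIV) {p. p permutes {..<M}}"
    and indep_pair: "\<forall>w\<in>seed_set z T. \<forall>A B.
       measure P {\<omega>\<in>space P. fst (X w \<omega>) \<in> A \<and> snd (X w \<omega>) \<in> B}
         = measure P {\<omega>\<in>space P. fst (X w \<omega>) \<in> A} * measure P {\<omega>\<in>space P. snd (X w \<omega>) \<in> B}"
  shows "\<forall>r<M.
      prob_space.expectation P (pi_hat X s z T r) = 1 / real M
    \<and> (\<forall>\<epsilon>>0.
         measure P {\<omega>\<in>space P. \<bar>pi_hat X s z T r \<omega> - 1 / real M\<bar> \<ge> \<epsilon>}
           \<le> 2 * exp (- (2 * \<epsilon>^2 * real T ^ 2 / S_T z T))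
       \<and> 2 * exp (- (2 * \<epsilon>^2 * real T ^ 2 / S_T z T)) = 2 * exp (- 2 * \<epsilon>^2 * T_eff z T))"
proof -
  interpret prob_space P by fact
  define I where "I = seed_set z T"
  have finI: "finite I" by (simp add: I_def seed_set_def)
  have Xm: "X w \<in> measurable P (count_space UNIV)" if "w \<in> I" for w
    using indep that unfolding indep_vars_def I_def by blast
  have ev: "{\<omega>\<in>space P. Q (X w \<omega>)} \<in> events" if "w \<in> I" for w Q
  proof -
    have "{\<omega>\<in>space P. Q (X w \<omega>)} = X w -` {x. Q x} \<inter> space P" by auto
    also have "\<dots> \<in> events" using measurable_sets[OF Xm[OF that], of "{x. Q x}"] by simp
    finally show ?thesis .
  qed
  define n where "n w = seed_count z T w" for w
  have group: "(\<Sum>t\<in>{1..T}. f (z t)) = (\<Sum>w\<in>I. real (n w) * f w)" for f :: "'z \<Rightarrow> real"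
  proof -
    have "(\<Sum>t\<in>{1..T}. f (z t)) = (\<Sum>w\<in>z ` {1..T}. \<Sum>t\<in>{t\<in>{1..T}. z t = w}. f (z t))"
      by (rule sum.image_gen) simp
    also have "\<dots> = (\<Sum>w\<in>I. real (n w) * f w)"
      unfolding I_def seed_set_def n_def seed_count_def
      by (intro sum.cong refl) simp
    finally show ?thesis .
  qed
  have sumn: "(\<Sum>w\<in>I. real (n w)) = real T"
    using group[of "\<lambda>_. 1"] by simp
  have npos: "n w \<ge> 1" if wI: "w \<in> I" for w
  proof -
    obtain t where t: "t \<in> {1..T}" "z t = w" using wI unfolding I_def seed_set_def by auto
    have "t \<in> {t\<in>{1..T}. z t = w}" using t by auto
    moreover have "finite {t\<in>{1..T}. z t = w}" by simp
    ultimately have "card {t\<in>{1..T}. z t = w} \<noteq> 0" by (metis card_0_eq empty_iff)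
    thus ?thesis unfolding n_def seed_count_def by linarith
  qed
  have Ine: "I \<noteq> {}" using \<open>T \<ge> 1\<close> unfolding I_def seed_set_def by auto
  have ST: "S_T z T = (\<Sum>w\<in>I. real (n w) ^ 2)"
    unfolding S_T_def I_def n_def ..
  have STpos: "S_T z T > 0"
    unfolding ST using npos Ine finI by (intro sum_pos) (auto, fastforce)
  have Tpos: "real T > 0" using \<open>T \<ge> 1\<close> by simp
  have Mpos: "real M > 0" using \<open>M \<ge> 1\<close> by simp
  define Perms where "Perms = {p. p permutes {..<M}}"
  have finPerms: "finite Perms" unfolding Perms_def by (rule finite_permutations) simp
  have cardPerms: "card Perms = fact M" unfolding Perms_def by (rule card_permutations) simp_all
  have pperm: "prob {\<omega>\<in>space P. snd (X w \<omega>) a = r} = 1 / real M"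
    if w: "w \<in> I" and a: "a < M" and r: "r < M" for w a r
  proof -
    have sm: "(\<lambda>\<omega>. snd (X w \<omega>)) \<in> measurable P (count_space UNIV)"
      using measurable_compose[OF Xm[OF w], of snd "count_space UNIV"] by (simp add: o_def)
    have "prob {\<omega>\<in>space P. snd (X w \<omega>) a = r}
        = measure (distr P (count_space UNIV) (\<lambda>\<omega>. snd (X w \<omega>))) {p. p a = r}"
      by (subst measure_distr[OF sm]) (auto intro!: arg_cong[where f=prob])
    also have "\<dots> = measure (uniform_measure (count_space UNIV) Perms) {p. p a = r}"
      using unif w unfolding I_def Perms_def by simp
    also have "\<dots> = measure (count_space UNIV) (Perms \<inter> {p. p a = r}) / measure (count_space UNIV) Perms"
      using finPerms cardPerms
      by (intro measure_uniform_measure) (auto simp: emeasure_count_space)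
    also have "Perms \<inter> {p. p a = r} = {p. p permutes {..<M} \<and> p a = r}" unfolding Perms_def by auto
    also have "measure (count_space UNIV) {p. p permutes {..<M} \<and> p a = r} = fact (M - 1)"
      using perm_count[of "{..<M}" a r] a r finPerms unfolding Perms_def
      by (subst measure_count_space) (auto intro: finite_subset)
    also have "measure (count_space UNIV) Perms = fact M"
      using finPerms cardPerms by (simp add: measure_count_space)
    also have "(fact (M - 1) :: real) / fact M = 1 / real M"
    proof -
      have "M = Suc (M - 1)" using \<open>M \<ge> 1\<close> by simp
      then have "(fact M :: real) = real M * fact (M - 1)"
        by (metis fact_Suc of_nat_fact of_nat_mult)
      thus ?thesis by simp
    qed
    finally show ?thesis .
  qed
  have ptarget: "prob {\<omega>\<in>space P. snd (X w \<omega>) (s (fst (X w \<omega>))) = r} = 1 / real M"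
    if w: "w \<in> I" and r: "r < M" for w r
  proof -
    have wI: "w \<in> seed_set z T" using w I_def by simp
    have "{\<omega>\<in>space P. snd (X w \<omega>) (s (fst (X w \<omega>))) = r}
        = (\<Union>i\<in>{1..H}. {\<omega>\<in>space P. fst (X w \<omega>) \<in> {i} \<and> snd (X w \<omega>) \<in> {p. p (s i) = r}})"
      using idx wI by auto
    hence "prob {\<omega>\<in>space P. snd (X w \<omega>) (s (fst (X w \<omega>))) = r}
        = (\<Sum>i\<in>{1..H}. prob {\<omega>\<in>space P. fst (X w \<omega>) \<in> {i} \<and> snd (X w \<omega>) \<in> {p. p (s i) = r}})"
      by (simp only:) (intro finite_measure_finite_Union, auto simp: disjoint_family_on_def intro!: ev[OF w])
    also have "\<dots> = (\<Sum>i\<in>{1..H}. prob {\<omega>\<in>space P. fst (X w \<omega>) \<in> {i}} * (1 / real M))"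
    proof (intro sum.cong refl)
      fix i assume i: "i \<in> {1..H}"
      have h: "prob {\<omega>\<in>space P. snd (X w \<omega>) \<in> {p. p (s i) = r}} = 1 / real M"
        using pperm[OF w _ r, of "s i"] msg i by simp
      have "prob {\<omega>\<in>space P. fst (X w \<omega>) \<in> {i} \<and> snd (X w \<omega>) \<in> {p. p (s i) = r}}
          = prob {\<omega>\<in>space P. fst (X w \<omega>) \<in> {i}} * prob {\<omega>\<in>space P. snd (X w \<omega>) \<in> {p. p (s i) = r}}"
        using indep_pair wI by blast
      thus "prob {\<omega>\<in>space P. fst (X w \<omega>) \<in> {i} \<and> snd (X w \<omega>) \<in> {p. p (s i) = r}}
          = prob {\<omega>\<in>space P. fst (X w \<omega>) \<in> {i}} * (1 / real M)"
        unfolding h .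
    qed
    also have "\<dots> = (\<Sum>i\<in>{1..H}. prob {\<omega>\<in>space P. fst (X w \<omega>) \<in> {i}}) * (1 / real M)"
      by (rule sum_distrib_right[symmetric])
    also have "(\<Sum>i\<in>{1..H}. prob {\<omega>\<in>space P. fst (X w \<omega>) \<in> {i}}) = prob (\<Union>i\<in>{1..H}. {\<omega>\<in>space P. fst (X w \<omega>) \<in> {i}})"
      by (intro finite_measure_finite_Union[symmetric]) (auto simp: disjoint_family_on_def intro!: ev[OF w])
    also have "(\<Union>i\<in>{1..H}. {\<omega>\<in>space P. fst (X w \<omega>) \<in> {i}}) = space P"
      using idx wI by auto
    finally show ?thesis by (simp add: prob_space)
  qed
  show ?thesis
  proof (intro allI impI)
    fix r assume r: "r < M"
    define Yf where "Yf w x = real (n w) / real T * (if snd x (s (fst x)) = r then 1 else 0)" for w and x :: "nat \<times> (nat \<Rightarrow> nat)"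
    define Y where "Y w \<omega> = Yf w (X w \<omega>)" for w \<omega>
    have pi: "pi_hat X s z T r \<omega> = (\<Sum>w\<in>I. Y w \<omega>)" for \<omega>
    proof -
      have "pi_hat X s z T r \<omega> = 1 / real T * (\<Sum>w\<in>I. real (n w) * (if snd (X w \<omega>) (s (fst (X w \<omega>))) = r then 1 else 0))"
        unfolding pi_hat_def target_bin_def by (subst group) simp
      thus ?thesis unfolding Y_def Yf_def by (simp add: sum_distrib_left)
    qed
    have EY: "expectation (Y w) = real (n w) / real T * (1 / real M)" if w: "w \<in> I" for w
    proof -
      have "expectation (Y w) = expectation (\<lambda>\<omega>. real (n w) / real T * indicator {\<omega>\<in>space P. snd (X w \<omega>) (s (fst (X w \<omega>))) = r} \<omega>)"
        unfolding Y_def Yf_def by (intro Bochner_Integration.integral_cong refl) (simp add: indicator_def)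
      also have "\<dots> = real (n w) / real T * prob {\<omega>\<in>space P. snd (X w \<omega>) (s (fst (X w \<omega>))) = r}"
        by (simp add: Int_absorb2)
      finally show ?thesis using ptarget[OF w r] by simp
    qed
    have mu: "1 / real M = (\<Sum>w\<in>I. expectation (Y w))"
    proof -
      have "(\<Sum>w\<in>I. expectation (Y w)) = (\<Sum>w\<in>I. real (n w)) / real T * (1 / real M)"
        by (simp add: EY sum_divide_distrib sum_distrib_right)
      thus ?thesis using sumn Tpos by simp
    qed
    interpret H: Hoeffding_ineq P I Y "\<lambda>_. 0" "\<lambda>w. real (n w) / real T" "1 / real M"
    proof unfold_locales
      show "finite I" by (rule finI)
      have indI: "indep_vars (\<lambda>_. count_space UNIV) X I" using indep unfolding I_def .
      have YY: "Y = (\<lambda>w \<omega>. Yf w (X w \<omega>))" by (intro ext) (simp add: Y_def)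
      show "indep_vars (\<lambda>_. borel) Y I"
        unfolding YY by (rule indep_vars_compose2[OF indI]) simp
      show "AE x in P. Y i x \<in> {0..real (n i) / real T}" for i
        unfolding Y_def Yf_def by (intro AE_I2) simp
      show "1 / real M \<equiv> \<Sum>i\<in>I. expectation (Y i)" using mu by simp
    qed
    have intY: "integrable P (Y w)" if "w \<in> I" for w
      by (rule interval_bounded_random_variable.integrable[OF H.bounded_random_variable[OF that]])
    have E: "expectation (pi_hat X s z T r) = 1 / real M"
    proof -
      have "expectation (pi_hat X s z T r) = expectation (\<lambda>\<omega>. \<Sum>w\<in>I. Y w \<omega>)"
        by (rule arg_cong[where f=expectation], rule ext, rule pi)
      also have "\<dots> = (\<Sum>w\<in>I. expectation (Y w))"
        by (rule Bochner_Integration.integral_sum) (rule intY)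
      finally show ?thesis using mu by simp
    qed
    have sq: "(\<Sum>w\<in>I. (real (n w) / real T - 0)\<^sup>2) = S_T z T / real T ^ 2"
      unfolding ST by (simp add: power_divide sum_divide_distrib)
    have sqpos: "(\<Sum>w\<in>I. (real (n w) / real T - 0)\<^sup>2) > 0"
      unfolding sq using STpos Tpos by simp
    show "expectation (pi_hat X s z T r) = 1 / real M \<and>
         (\<forall>\<epsilon>>0. prob {\<omega> \<in> space P. \<epsilon> \<le> \<bar>pi_hat X s z T r \<omega> - 1 / real M\<bar>}
                  \<le> 2 * exp (- (2 * \<epsilon>\<^sup>2 * real T ^ 2 / S_T z T)) \<and>
                  2 * exp (- (2 * \<epsilon>\<^sup>2 * real T ^ 2 / S_T z T)) = 2 * exp (- 2 * \<epsilon>\<^sup>2 * T_eff z T))"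
    proof (intro conjI allI impI E)
      fix \<epsilon> :: real assume e: "\<epsilon> > 0"
      have "prob {\<omega> \<in> space P. \<epsilon> \<le> \<bar>pi_hat X s z T r \<omega> - 1 / real M\<bar>}
          = prob {x\<in>space P. \<bar>(\<Sum>i\<in>I. Y i x) - 1 / real M\<bar> \<ge> \<epsilon>}"
        by (simp add: pi)
      also have "\<dots> \<le> 2 * exp (-2 * \<epsilon>\<^sup>2 / (\<Sum>i\<in>I. (real (n i) / real T - 0)\<^sup>2))"
        using H.Hoeffding_ineq_abs_ge[of \<epsilon>] e sqpos by simp
      also have "-2 * \<epsilon>\<^sup>2 / (\<Sum>i\<in>I. (real (n i) / real T - 0)\<^sup>2) = - (2 * \<epsilon>\<^sup>2 * real T ^ 2 / S_T z T)"
        unfolding sq using STpos Tpos by (simp add: field_simps)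
      finally show "prob {\<omega> \<in> space P. \<epsilon> \<le> \<bar>pi_hat X s z T r \<omega> - 1 / real M\<bar>}
                  \<le> 2 * exp (- (2 * \<epsilon>\<^sup>2 * real T ^ 2 / S_T z T))" .
      show "2 * exp (- (2 * \<epsilon>\<^sup>2 * real T ^ 2 / S_T z T)) = 2 * exp (- 2 * \<epsilon>\<^sup>2 * T_eff z T)"
        unfolding T_eff_def by simp
    qed
  qed
qed

end
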